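(* Let $\Omega$ be a countably infinite set and $S=\mathrm{Sym}(\Omega)$. The countable subgroups of $S$ form an equivalence class under $\approx$, and every countable subgroup $G$ satisfies $G\prec S_{(A)}$ for every partition $A$ of $\Omega$ having a common finite bound on the cardinalities of its members and infinitely many members of cardinality $>1$. Moreover, for a subgroup $G\le S$ the following are equivalent: (i) $G$ is countable and closed; (ii) there exists a finite subset $\Gamma\subseteq\Omega$ such that $G_{(\Gamma)}=\{1\}$; (iii) $G$ is discrete.
   Context: $\mathrm{Sym}(\Omega)$ is the group of all permutations of $\Omega$ (acting on the right). $S$ carries the function topology (pointwise convergence, $\Omega$ discrete); "closed" and "discrete" refer to this topology (discrete meaning discrete in the subspace topology). For a partition $A$ of $\Omega$, $S_{(A)}=\{f\in S:\Sigma f=\Sigma\text{ for all }\Sigma\in A\}$. $G_{(\Gamma)}$ denotes the pointwise stabilizer of $\Gamma$ in $G$. For subgroups $G_1,G_2\le S$: $G_1\preccurlyeq G_2$ means there is a finite $U\subseteq S$ with $G_1\le\langle G_2\cup U\rangle$; $G_1\approx G_2$ means both $G_1\preccurlyeq G_2$ and $G_2\preccurlyeq G_1$; $G_1\prec G_2$ means $G_1\preccurlyeq G_2$ and not $G_2\preccurlyeq G_1$. *)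

theory Defs
  imports "HOL-Analysis.Analysis" "HOL-Algebra.Bij" "HOL-Algebra.Generated_Groups"
    "HOL-Library.Disjoint_Sets"
begin

definition SymG :: "('a \<Rightarrow> 'a) monoid" where
  "SymG = BijGroup (UNIV :: 'a set)"

definition sym_top :: "('a \<Rightarrow> 'a) topology" where
  "sym_top = subtopology (product_topology (\<lambda>_. discrete_topology (UNIV :: 'a set)) UNIV)
                         (carrier SymG)"

definition sym_closed :: "('a \<Rightarrow> 'a) set \<Rightarrow> bool" where
  "sym_closed G \<longleftrightarrow> closedin sym_top G"

definition sym_discrete :: "('a \<Rightarrow> 'a) set \<Rightarrow> bool" where
  "sym_discrete G \<longleftrightarrow> subtopology sym_top G = discrete_topology G"

definition pstab :: "('a \<Rightarrow> 'a) set \<Rightarrow> 'a set \<Rightarrow> ('a \<Rightarrow> 'a) set" where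
  "pstab G \<Gamma> = {g \<in> G. \<forall>x\<in>\<Gamma>. g x = x}"

definition setwise_stab :: "'a set set \<Rightarrow> ('a \<Rightarrow> 'a) set" where
  "setwise_stab A = {f \<in> carrier SymG. \<forall>\<Sigma>\<in>A. f ` \<Sigma> = \<Sigma>}"

definition sym_preceq :: "('a \<Rightarrow> 'a) set \<Rightarrow> ('a \<Rightarrow> 'a) set \<Rightarrow> bool" (infix "\<preccurlyeq>\<^sub>S" 50) where
  "G1 \<preccurlyeq>\<^sub>S G2 \<longleftrightarrow> (\<exists>U. finite U \<and> U \<subseteq> carrier SymG \<and> G1 \<subseteq> generate SymG (G2 \<union> U))"

definition sym_approx :: "('a \<Rightarrow> 'a) set \<Rightarrow> ('a \<Rightarrow> 'a) set \<Rightarrow> bool" (infix "\<approx>\<^sub>S" 50) where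
  "G1 \<approx>\<^sub>S G2 \<longleftrightarrow> G1 \<preccurlyeq>\<^sub>S G2 \<and> G2 \<preccurlyeq>\<^sub>S G1"

definition sym_prec :: "('a \<Rightarrow> 'a) set \<Rightarrow> ('a \<Rightarrow> 'a) set \<Rightarrow> bool" (infix "\<prec>\<^sub>S" 50) where
  "G1 \<prec>\<^sub>S G2 \<longleftrightarrow> G1 \<preccurlyeq>\<^sub>S G2 \<and> \<not> G2 \<preccurlyeq>\<^sub>S G1"

end

theory Submission
  imports Defs
begin

abbreviation iv :: "('b \<Rightarrow> 'b) \<Rightarrow> 'b \<Rightarrow> 'b" where "iv f \<equiv> inv_into UNIV f"

lemma carrier_SymG: "carrier (SymG::('a\<Rightarrow>'a) monoid) = {f. bij f}"
  unfolding SymG_def BijGroup_def Bij_def by auto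

lemma group_SymG: "group (SymG::('a\<Rightarrow>'a) monoid)"
  unfolding SymG_def by (rule group_BijGroup)

lemma mult_SymG: "bij f \<Longrightarrow> bij g \<Longrightarrow> f \<otimes>\<^bsub>(SymG::('a\<Rightarrow>'a) monoid)\<^esub> g = f \<circ> g"
  unfolding SymG_def BijGroup_def Bij_def compose_def by (auto)

lemma one_SymG: "\<one>\<^bsub>(SymG::('a\<Rightarrow>'a) monoid)\<^esub> = id"
  unfolding SymG_def BijGroup_def by (auto)

lemma inv_SymG: "bij f \<Longrightarrow> inv\<^bsub>(SymG::('a\<Rightarrow>'a) monoid)\<^esub> f = iv f"
proof -
  assume b: "bij f"
  have bi: "bij (iv f)" using b by (simp add: bij_imp_bij_inv)
  have "iv f \<otimes>\<^bsub>(SymG::('a\<Rightarrow>'a) monoid)\<^esub> f = \<one>\<^bsub>(SymG::('a\<Rightarrow>'a) monoid)\<^esub>"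
    using b bi by (simp add: mult_SymG one_SymG bij_is_inj)
  then show ?thesis using group.inv_equality[OF group_SymG] b bi by (simp add: carrier_SymG)
qed

context
  fixes G :: "('a \<Rightarrow> 'a) set"
  assumes sg: "subgroup G (SymG::('a\<Rightarrow>'a) monoid)"
begin
lemma sg_bij: "g \<in> G \<Longrightarrow> bij g"
  using subgroup.subset[OF sg] carrier_SymG by blast
lemma sg_comp: "g \<in> G \<Longrightarrow> h \<in> G \<Longrightarrow> g \<circ> h \<in> G"
  using subgroup.m_closed[OF sg] mult_SymG sg_bij by metis
lemma sg_inv: "g \<in> G \<Longrightarrow> iv g \<in> G"
  using subgroup.m_inv_closed[OF sg] inv_SymG sg_bij by metis
lemma sg_id: "id \<in> G"
  using subgroup.one_closed[OF sg] one_SymG by metis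
end


abbreviation PT :: "('a \<Rightarrow> 'a) topology" where
  "PT \<equiv> product_topology (\<lambda>_. discrete_topology (UNIV :: 'a set)) UNIV"

definition nbhd :: "('a \<Rightarrow> 'a) \<Rightarrow> 'a set \<Rightarrow> ('a \<Rightarrow> 'a) set" where
  "nbhd f D = {g. \<forall>x\<in>D. g x = f x}"

lemma open_nbhd: "finite D \<Longrightarrow> openin PT (nbhd f D)"
  unfolding openin_product_topology_alt
proof (intro ballI)
  fix x assume fD: "finite D" and x: "x \<in> nbhd f D"
  let ?U = "\<lambda>i. if i \<in> D then {f i} else UNIV"
  have "finite {i \<in> UNIV. ?U i \<noteq> topspace (discrete_topology UNIV)}"
    by (rule finite_subset[OF _ fD]) auto
  moreover have "x \<in> Pi\<^sub>E UNIV ?U" using x by (auto simp: nbhd_def PiE_def Pi_def)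
  moreover have "Pi\<^sub>E UNIV ?U \<subseteq> nbhd f D" by (auto simp: nbhd_def PiE_def Pi_def)
  ultimately show "\<exists>U. finite {i \<in> UNIV. U i \<noteq> topspace (discrete_topology UNIV)} \<and>
             (\<forall>i\<in>UNIV. openin (discrete_topology UNIV) (U i)) \<and> x \<in> Pi\<^sub>E UNIV U \<and> Pi\<^sub>E UNIV U \<subseteq> nbhd f D"
    by (intro exI[of _ ?U]) auto
qed

lemma open_has_nbhd: "openin PT U \<Longrightarrow> f \<in> U \<Longrightarrow> \<exists>D. finite D \<and> nbhd f D \<subseteq> U"
proof -
  assume "openin PT U" "f \<in> U"
  then obtain V where V: "finite {i \<in> UNIV. V i \<noteq> topspace (discrete_topology (UNIV::'a set))}"
     "f \<in> Pi\<^sub>E UNIV V" "Pi\<^sub>E UNIV V \<subseteq> U"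
    unfolding openin_product_topology_alt by blast
  let ?D = "{i. V i \<noteq> UNIV}"
  have "nbhd f ?D \<subseteq> Pi\<^sub>E UNIV V"
  proof
    fix g assume g: "g \<in> nbhd f ?D"
    have "g i \<in> V i" for i
      using g V(2) by (cases "V i = UNIV") (auto simp: nbhd_def PiE_def Pi_def)
    then show "g \<in> Pi\<^sub>E UNIV V" by (auto simp: PiE_def Pi_def)
  qed
  then show ?thesis using V by (intro exI[of _ ?D]) auto
qed

lemma topspace_sym_top: "topspace (sym_top::('a\<Rightarrow>'a) topology) = carrier SymG"
  unfolding sym_top_def by (auto simp: PiE_def Pi_def)

lemma closed_char:
  assumes cl: "sym_closed G" and Gc: "G \<subseteq> carrier SymG" and h: "bij h"
    and ap: "\<And>D. finite D \<Longrightarrow> \<exists>g\<in>G. \<forall>x\<in>D. g x = h x"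
  shows "h \<in> G"
proof (rule ccontr)
  assume nh: "h \<notin> G"
  have "openin sym_top (topspace sym_top - G)" using cl unfolding sym_closed_def closedin_def by blast
  then have "openin (subtopology PT (carrier SymG)) (carrier SymG - G)"
    by (simp add: topspace_sym_top sym_top_def)
  then obtain T where T: "openin PT T" "carrier SymG - G = T \<inter> carrier SymG"
    unfolding openin_subtopology by blast
  have "h \<in> T" using T(2) nh h carrier_SymG by blast
  then obtain D where D: "finite D" "nbhd h D \<subseteq> T" using open_has_nbhd[OF T(1)] by blast
  obtain g where g: "g \<in> G" "\<forall>x\<in>D. g x = h x" using ap[OF D(1)] by blast
  have "g \<in> nbhd h D" using g by (auto simp: nbhd_def)
  then have "g \<in> carrier SymG - G" using T(2) D(2) g(1) Gc by blast
  then show False using g by blast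
qed

lemma closed_intro:
  assumes Gc: "G \<subseteq> carrier SymG"
    and H: "\<And>h. h \<in> carrier SymG - G \<Longrightarrow> \<exists>D. finite D \<and> nbhd h D \<inter> G = {}"
  shows "sym_closed G"
proof -
  have "openin sym_top (carrier SymG - G)"
  proof (subst openin_subopen, intro ballI)
    fix h assume hh: "h \<in> carrier SymG - G"
    obtain D where D: "finite D" "nbhd h D \<inter> G = {}" using H[OF hh] by blast
    have "openin sym_top (nbhd h D \<inter> carrier SymG)"
      unfolding sym_top_def openin_subtopology using open_nbhd[OF D(1)] by blast
    moreover have "h \<in> nbhd h D \<inter> carrier SymG" using hh by (auto simp: nbhd_def)
    moreover have "nbhd h D \<inter> carrier SymG \<subseteq> carrier SymG - G" using D(2) by blast
    ultimately show "\<exists>T. openin sym_top T \<and> h \<in> T \<and> T \<subseteq> carrier SymG - G" by blast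
  qed
  then show ?thesis unfolding sym_closed_def closedin_def using Gc topspace_sym_top by metis
qed

context
  fixes G :: "('a::countable \<Rightarrow> 'a) set"
  assumes sg: "subgroup G (SymG::('a\<Rightarrow>'a) monoid)"
begin

lemma Gc: "G \<subseteq> carrier SymG" using subgroup.subset[OF sg] .

lemma stab_unique:
  assumes st: "pstab G D = {id}" and g: "g \<in> G" and h: "h \<in> G" and agr: "\<forall>x\<in>D. g x = h x"
  shows "g = h"
proof -
  have bh: "bij h" "bij g" using sg_bij[OF sg] g h by auto
  have "iv h \<circ> g \<in> G" using sg_comp[OF sg sg_inv[OF sg h] g] .
  moreover have "\<forall>x\<in>D. (iv h \<circ> g) x = x" using agr bh by (simp add: bij_is_inj)
  ultimately have "iv h \<circ> g \<in> pstab G D" by (simp add: pstab_def)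
  then have "iv h \<circ> g = id" using st by blast
  moreover have "h \<circ> (iv h \<circ> g) = g" using bh(1) by (auto simp: fun_eq_iff surj_f_inv_f bij_is_surj)
  ultimately show ?thesis by simp
qed

lemma stab_countable:
  assumes fD: "finite D" and st: "pstab G D = {id}"
  shows "countable G"
proof -
  let ?r = "\<lambda>g. restrict g D"
  have "inj_on ?r G"
  proof (rule inj_onI)
    fix g h assume "g \<in> G" "h \<in> G" "?r g = ?r h"
    then show "g = h" using stab_unique[OF st] by (metis restrict_apply')
  qed
  moreover have "countable (?r ` G)"
    by (rule countable_subset[OF _ countable_PiE[OF fD, of "\<lambda>_. UNIV"]]) auto
  ultimately show ?thesis using countable_image_inj_on by blast
qed

lemma stab_closed:
  assumes fD: "finite D" and st: "pstab G D = {id}"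
  shows "sym_closed G"
proof (rule closed_intro[OF Gc])
  fix h assume hh: "h \<in> carrier SymG - G"
  show "\<exists>D. finite D \<and> nbhd h D \<inter> G = {}"
  proof (cases "\<exists>g\<in>G. \<forall>x\<in>D. g x = h x")
    case True
    then obtain g where g: "g \<in> G" "\<forall>x\<in>D. g x = h x" by blast
    have "g \<noteq> h" using g hh by blast
    then obtain x0 where x0: "g x0 \<noteq> h x0" by blast
    have "nbhd h (insert x0 D) \<inter> G = {}"
    proof (rule ccontr)
      assume "nbhd h (insert x0 D) \<inter> G \<noteq> {}"
      then obtain k where k: "k \<in> G" "\<forall>x\<in>insert x0 D. k x = h x" by (auto simp: nbhd_def)
      then have "k = g" using stab_unique[OF st k(1) g(1)] g(2) by simp
      then show False using k x0 by simp
    qed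
    then show ?thesis using fD by blast
  next
    case False
    then have "nbhd h D \<inter> G = {}" by (auto simp: nbhd_def)
    then show ?thesis using fD by blast
  qed
qed

lemma stab_discrete:
  assumes fD: "finite D" and st: "pstab G D = {id}"
  shows "sym_discrete G"
  unfolding sym_discrete_def
proof (rule sym, subst discrete_topology_unique, intro conjI ballI)
  show "topspace (subtopology sym_top G) = G" using Gc topspace_sym_top by auto
  fix g assume g: "g \<in> G"
  have "openin sym_top (nbhd g D \<inter> carrier SymG)"
    unfolding sym_top_def openin_subtopology using open_nbhd[OF fD] by blast
  moreover have "{g} = (nbhd g D \<inter> carrier SymG) \<inter> G"
    using g Gc stab_unique[OF st] by (auto simp: nbhd_def)
  ultimately show "openin (subtopology sym_top G) {g}"
    unfolding openin_subtopology by blast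
qed

lemma discrete_stab:
  assumes "sym_discrete G"
  shows "\<exists>D. finite D \<and> pstab G D = {id}"
proof -
  have "openin (subtopology sym_top G) {id}"
    using assms sg_id[OF sg] unfolding sym_discrete_def
    by (metis discrete_topology_unique empty_subsetI insert_subset)
  then have "openin (subtopology PT (carrier SymG \<inter> G)) {id}"
    by (simp add: sym_top_def subtopology_subtopology)
  then obtain V where V: "openin PT V" "{id} = V \<inter> (carrier SymG \<inter> G)"
    unfolding openin_subtopology by blast
  have "id \<in> V" using V(2) by blast
  then obtain D where D: "finite D" "nbhd id D \<subseteq> V" using open_has_nbhd[OF V(1)] by blast
  have "pstab G D \<subseteq> {id}"
  proof
    fix g assume "g \<in> pstab G D"
    then have "g \<in> G" "g \<in> nbhd id D" by (auto simp: pstab_def nbhd_def)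
    then show "g \<in> {id}" using V(2) D(2) Gc by blast
  qed
  moreover have "id \<in> pstab G D" using sg_id[OF sg] by (simp add: pstab_def)
  ultimately show ?thesis using D(1) by blast
qed


lemma closed_countable_stab:
  assumes cG: "countable G" and cl: "sym_closed G"
  shows "\<exists>D. finite D \<and> pstab G D = {id}"
proof (rule ccontr)
  assume nst: "\<not> (\<exists>D. finite D \<and> pstab G D = {id})"
  have Gne: "G \<noteq> {}" using sg_id[OF sg] by blast
  define g where "g = from_nat_into G"
  have rg: "range g = G" using range_from_nat_into[OF Gne cG] g_def by simp
  define e where "e = from_nat_into (UNIV::'a set)"
  have re: "range e = UNIV" using range_from_nat_into[of "UNIV::'a set"] e_def by simp
  define P where "P = (\<lambda>(k::nat) (p::('a\<Rightarrow>'a) \<times> 'a set) (q::('a\<Rightarrow>'a) \<times> 'a set).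
      fst q \<in> G \<and> finite (snd q) \<and> snd p \<subseteq> snd q \<and> e k \<in> snd q \<and>
      (\<forall>x\<in>snd p. fst q x = fst p x \<and> iv (fst q) x = iv (fst p) x) \<and> (\<exists>x\<in>snd q. fst q x \<noteq> g k x))"
  have step: "\<exists>q. P k p q" if "fst p \<in> G" "finite (snd p)" for k p
  proof -
    obtain h \<Gamma> where p: "p = (h, \<Gamma>)" by (cases p)
    have h: "h \<in> G" "finite \<Gamma>" using that p by auto
    show ?thesis
    proof (cases "h = g k")
      case False
      then obtain z where z: "h z \<noteq> g k z" by auto
      show ?thesis unfolding P_def p
        by (rule exI[of _ "(h, insert z (insert (e k) \<Gamma>))"]) (use h z in auto)
    next
      case True
      let ?D = "\<Gamma> \<union> iv h ` \<Gamma>"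
      have fD: "finite ?D" using h by simp
      have "pstab G ?D \<noteq> {id}" using nst fD by blast
      moreover have "id \<in> pstab G ?D" using sg_id[OF sg] by (simp add: pstab_def)
      ultimately obtain u where u: "u \<in> pstab G ?D" "u \<noteq> id" by blast
      have uG: "u \<in> G" and ufix: "\<forall>x\<in>?D. u x = x" using u by (auto simp: pstab_def)
      have bu: "bij u" and bh: "bij h" using sg_bij[OF sg] h(1) uG by auto
      obtain z where z: "u z \<noteq> z" using u(2) by (auto simp: fun_eq_iff)
      have hz: "(h \<circ> u) z \<noteq> g k z" using True z bh by (auto simp: bij_is_inj inj_eq)
      have fix1: "\<forall>x\<in>\<Gamma>. (h \<circ> u) x = h x" using ufix by auto
      have inv_eq: "iv (h \<circ> u) = iv u \<circ> iv h" using bu bh by (simp add: o_inv_distrib)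
      have fix2: "\<forall>x\<in>\<Gamma>. iv (h \<circ> u) x = iv h x"
      proof
        fix x assume "x \<in> \<Gamma>"
        then have "u (iv h x) = iv h x" using ufix by auto
        then have "iv u (iv h x) = iv h x" using bu by (metis bij_is_inj inv_f_f)
        then show "iv (h \<circ> u) x = iv h x" using inv_eq by simp
      qed
      show ?thesis unfolding P_def p
        by (rule exI[of _ "(h \<circ> u, insert z (insert (e k) \<Gamma>))"])
          (use h sg_comp[OF sg h(1) uG] hz fix1 fix2 in auto)
    qed
  qed
  define seq where "seq = rec_nat (id, {}) (\<lambda>k p. SOME q. P k p q)"
  have seq0: "seq 0 = (id, {})" and seqS: "seq (Suc k) = (SOME q. P k (seq k) q)" for k
    by (simp_all add: seq_def)
  have inv: "fst (seq k) \<in> G \<and> finite (snd (seq k))" for k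
  proof (induction k)
    case 0 then show ?case using sg_id[OF sg] seq0 by (simp add: id_def)
  next
    case (Suc k)
    have "\<exists>q. P k (seq k) q" using step Suc.IH by blast
    then have "P k (seq k) (seq (Suc k))" unfolding seqS by (rule someI_ex)
    then show ?case unfolding P_def by simp
  qed
  have Pk: "P k (seq k) (seq (Suc k))" for k
  proof -
    have "\<exists>q. P k (seq k) q" using step inv by blast
    then show ?thesis unfolding seqS by (rule someI_ex)
  qed
  define hh where "hh k = fst (seq k)" for k
  define GG where "GG k = snd (seq k)" for k
  have mono: "GG k \<subseteq> GG m \<and> (\<forall>x\<in>GG k. hh m x = hh k x \<and> iv (hh m) x = iv (hh k) x)"
    if "k \<le> m" for k m
    using that
  proof (induct m rule: dec_induct)
    case base then show ?case by simp
  next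
    case (step n)
    have PP: "P n (seq n) (seq (Suc n))" by (rule Pk)
    have A: "GG n \<subseteq> GG (Suc n)"
      using PP unfolding P_def hh_def GG_def by blast
    have B: "\<forall>x\<in>GG n. hh (Suc n) x = hh n x \<and> iv (hh (Suc n)) x = iv (hh n) x"
      using PP unfolding P_def hh_def GG_def by blast
    have C: "GG k \<subseteq> GG n \<and> (\<forall>x\<in>GG k. hh n x = hh k x \<and> iv (hh n) x = iv (hh k) x)"
      using step.hyps(3) .
    show ?case
    proof (intro conjI ballI)
      show "GG k \<subseteq> GG (Suc n)" using A C by blast
    next
      fix x assume x: "x \<in> GG k"
      then have xn: "x \<in> GG n" using C by blast
      show "hh (Suc n) x = hh k x" using B C x xn by simp
      show "iv (hh (Suc n)) x = iv (hh k) x" using B C x xn by simp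
    qed
  qed
  have eGG: "e k \<in> GG (Suc k)" for k using Pk[of k] unfolding P_def GG_def by simp
  have cover: "\<exists>m. D \<subseteq> GG m" if "finite D" for D
    using that
  proof (induction D rule: finite_induct)
    case empty then show ?case by blast
  next
    case (insert x D)
    then obtain m where m: "D \<subseteq> GG m" by blast
    obtain k where k: "e k = x" using re by (metis UNIV_I image_iff)
    have "D \<subseteq> GG (max m (Suc k))" using m mono[of m "max m (Suc k)"] by auto
    moreover have "x \<in> GG (max m (Suc k))" using eGG[of k] k mono[of "Suc k" "max m (Suc k)"] by auto
    ultimately show ?case by blast
  qed
  have agree: "hh m x = hh m' x \<and> iv (hh m) x = iv (hh m') x" if "x \<in> GG m" "x \<in> GG m'" for x m m'
    using mono[of m "max m m'"] mono[of m' "max m m'"] that by auto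
  define H where "H x = hh (SOME m. x \<in> GG m) x" for x
  define H' where "H' x = iv (hh (SOME m. x \<in> GG m)) x" for x
  have exm: "\<exists>m. x \<in> GG m" for x using cover[of "{x}"] by auto
  have HH: "H x = hh m x" "H' x = iv (hh m) x" if "x \<in> GG m" for x m
    using agree[OF that someI_ex[OF exm[of x]]] unfolding H_def H'_def by auto
  have bhh: "bij (hh m)" for m unfolding hh_def using inv[of m] sg_bij[OF sg] by blast
  have HH'1: "H (H' y) = y" for y
  proof -
    obtain m where m: "{y, H' y} \<subseteq> GG m" using cover[of "{y, H' y}"] by auto
    then have "H' y = iv (hh m) y" using HH by auto
    then have "H (H' y) = hh m (iv (hh m) y)" using HH m by auto
    then show ?thesis using bhh by (simp add: bij_is_surj surj_f_inv_f)
  qed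
  have HH'2: "H' (H y) = y" for y
  proof -
    obtain m where m: "{y, H y} \<subseteq> GG m" using cover[of "{y, H y}"] by auto
    then have "H y = hh m y" using HH by auto
    then have "H' (H y) = iv (hh m) (hh m y)" using HH m by auto
    then show ?thesis using bhh by (simp add: bij_is_inj inv_f_f)
  qed
  have bH: "bij H" using o_bij[of H' H] HH'1 HH'2 by (auto simp: fun_eq_iff)
  have HG: "H \<in> G"
  proof (rule closed_char[OF cl Gc bH])
    fix D :: "'a set" assume "finite D"
    then obtain m where m: "D \<subseteq> GG m" using cover by blast
    have "hh m \<in> G" using inv[of m] unfolding hh_def by blast
    moreover have "\<forall>x\<in>D. hh m x = H x" using HH(1) m by auto
    ultimately show "\<exists>g\<in>G. \<forall>x\<in>D. g x = H x" by blast
  qed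
  then obtain k where k: "H = g k" using rg by blast
  from Pk[of k] obtain x where "x \<in> GG (Suc k)" "hh (Suc k) x \<noteq> g k x"
    unfolding P_def GG_def hh_def by auto
  then show False using HH(1) k by metis
qed

end
lemma natset_uncountable: "\<not> countable (UNIV :: nat set set)"
proof
  assume c: "countable (UNIV :: nat set set)"
  define f where "f = from_nat_into (UNIV :: nat set set)"
  have "range f = UNIV" using range_from_nat_into[OF _ c] f_def by simp
  then obtain m where m: "f m = {n. n \<notin> f n}" by (metis UNIV_I image_iff)
  then show False by (metis mem_Collect_eq)
qed

lemma stab_uncountable:
  fixes A :: "'a set set"
  assumes pA: "partition_on UNIV A" and fin: "\<forall>S\<in>A. finite S"
    and inf: "infinite {S\<in>A. card S > 1}"
  shows "\<not> countable (setwise_stab A)"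
proof
  assume cS: "countable (setwise_stab A)"
  obtain b :: "nat \<Rightarrow> 'a set" where b: "inj b" "range b \<subseteq> {S\<in>A. card S > 1}"
    using infinite_countable_subset[OF inf] by blast
  have bA: "b n \<in> A" for n using b(2) by auto
  have two: "\<exists>p q. p \<in> b n \<and> q \<in> b n \<and> p \<noteq> q" for n
  proof -
    have "card (b n) > 1" using b(2) by auto
    moreover have "finite (b n)" using fin bA by blast
    ultimately show ?thesis using card_le_Suc0_iff_eq[of "b n"] by auto
  qed
  obtain a c where ac: "\<And>n. a n \<in> b n \<and> c n \<in> b n \<and> a n \<noteq> c n" using two by metis
  have disj: "b n \<inter> b m = {}" if "n \<noteq> m" for n m
    using disjointD[OF partition_onD2[OF pA] bA bA] b(1) that by (metis injD)
  have disjS: "S = b n" if "S \<in> A" "x \<in> S" "x \<in> b n" for S x n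
    using disjointD[OF partition_onD2[OF pA] that(1) bA] that by blast
  define N where "N x = (THE n. x \<in> b n)" for x
  have Nx: "N x = n" if "x \<in> b n" for x n
    unfolding N_def using that disj by (intro the_equality) auto
  define sw where "sw n x = (if x = a n then c n else if x = c n then a n else x)" for n x
  have swin: "sw n x \<in> b n" if "x \<in> b n" for n x using that ac unfolding sw_def by auto
  have swsw: "sw n (sw n x) = x" for n x using ac[of n] unfolding sw_def by auto
  define tau where "tau S x = (if (\<exists>n. x \<in> b n) \<and> N x \<in> S then sw (N x) x else x)" for S x
  have invol: "tau S (tau S x) = x" for S x
  proof (cases "(\<exists>n. x \<in> b n) \<and> N x \<in> S")
    case True
    then obtain n where n: "x \<in> b n" "N x = n" "n \<in> S" using Nx by blast
    have "sw n x \<in> b n" using swin n by blast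
    then have "N (sw n x) = n" using Nx by blast
    then show ?thesis unfolding tau_def using n swsw \<open>sw n x \<in> b n\<close> by auto
  next
    case False
    then show ?thesis unfolding tau_def by auto
  qed
  have btau: "bij (tau S)" for S using o_bij[of "tau S" "tau S"] invol by (auto simp: fun_eq_iff)
  have pres: "tau S ` T = T" if "T \<in> A" for S T
  proof -
    have sub: "tau S ` T \<subseteq> T"
    proof
      fix y assume "y \<in> tau S ` T"
      then obtain x where x: "x \<in> T" "y = tau S x" by blast
      show "y \<in> T"
      proof (cases "(\<exists>n. x \<in> b n) \<and> N x \<in> S")
        case True
        then obtain n where n: "x \<in> b n" "N x = n" using Nx by blast
        have "T = b n" using disjS[OF that x(1) n(1)] .
        then show ?thesis using x n swin True unfolding tau_def by auto
      next
        case False then show ?thesis using x unfolding tau_def by auto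
      qed
    qed
    moreover have "T \<subseteq> tau S ` T"
    proof
      fix x assume "x \<in> T"
      then have "tau S x \<in> T" using sub by blast
      then show "x \<in> tau S ` T" using invol[of S x] by (metis image_eqI)
    qed
    ultimately show ?thesis by blast
  qed
  have inj: "inj tau"
  proof (rule injI)
    fix S S' assume eq: "tau S = tau S'"
    show "S = S'"
    proof (rule ccontr)
      assume "S \<noteq> S'"
      then obtain n where n: "(n \<in> S) \<noteq> (n \<in> S')" by blast
      have an: "a n \<in> b n" "N (a n) = n" using ac Nx by auto
      have "tau S (a n) \<noteq> tau S' (a n)"
        using n an ac[of n] unfolding tau_def sw_def by auto
      then show False using eq by simp
    qed
  qed
  have "range tau \<subseteq> setwise_stab A"
    unfolding setwise_stab_def carrier_SymG using btau pres by blast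
  then have "countable (range tau)" using cS by (rule countable_subset)
  then have "countable (UNIV :: nat set set)" using countable_image_inj_on inj by blast
  then show False using natset_uncountable by blast
qed

fun ev :: "(bool \<times> ('a\<Rightarrow>'a)) list \<Rightarrow> 'a \<Rightarrow> 'a" where
  "ev [] = id"
| "ev ((b,f)#xs) = (if b then f else iv f) \<circ> ev xs"

lemma ev_append: "ev (xs @ ys) = ev xs \<circ> ev ys"
  by (induction xs) (auto simp: o_assoc)

lemma gen_countable:
  fixes K :: "('a::countable \<Rightarrow> 'a) set"
  assumes cK: "countable K" and Kc: "K \<subseteq> carrier SymG"
  shows "countable (generate SymG K)"
proof -
  have "generate SymG K \<subseteq> ev ` lists ((UNIV::bool set) \<times> K)"
  proof
    fix h assume "h \<in> generate SymG K"
    then show "h \<in> ev ` lists ((UNIV::bool set) \<times> K)"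
    proof induction
      case one
      show ?case by (rule image_eqI[where x="[]"]) (simp_all add: one_SymG)
    next
      case (incl h)
      show ?case by (rule image_eqI[where x="[(True,h)]"]) (use incl in simp_all)
    next
      case (inv h)
      have "bij h" using inv Kc carrier_SymG by blast
      then show ?case by (intro image_eqI[where x="[(False,h)]"]) (use inv in \<open>simp_all add: inv_SymG\<close>)
    next
      case (eng h1 h2)
      have "bij h1" "bij h2" using group.generate_in_carrier[OF group_SymG Kc] eng(1,2) carrier_SymG by blast+
      then have e: "h1 \<otimes>\<^bsub>SymG\<^esub> h2 = h1 \<circ> h2" by (simp add: mult_SymG)
      obtain xs ys where xy: "xs \<in> lists ((UNIV::bool set) \<times> K)" "ys \<in> lists ((UNIV::bool set) \<times> K)"
        "h1 = ev xs" "h2 = ev ys"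
        using eng(3,4) by blast
      show ?case by (rule image_eqI[where x="xs @ ys"]) (use xy e in \<open>simp_all add: ev_append\<close>)
    qed
  qed
  moreover have "countable (ev ` lists ((UNIV::bool set) \<times> K))"
  proof -
    have cb: "countable (UNIV::bool set)" by (rule countable_finite) simp
    have "countable ((UNIV::bool set) \<times> K)" using countable_SIGMA[OF cb, of "\<lambda>_. K"] cK by simp
    then have "countable (lists ((UNIV::bool set) \<times> K))" by (rule countable_lists)
    then show ?thesis by (rule countable_image)
  qed
  ultimately show ?thesis by (rule countable_subset)
qed

definition SymS :: "'b set \<Rightarrow> ('b \<Rightarrow> 'b) set" where
  "SymS Y = {f. bij f \<and> (\<forall>x. x \<notin> Y \<longrightarrow> f x = x)}"

lemma bij_inf:
  fixes S T :: "'b::countable set"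
  assumes "infinite S" "infinite T"
  shows "\<exists>f. bij_betw f S T"
proof -
  obtain eS :: "'b \<Rightarrow> nat" where eS: "bij_betw eS S UNIV"
    using countableE_infinite[OF countableI_type assms(1)] by blast
  obtain eT :: "'b \<Rightarrow> nat" where eT: "bij_betw eT T UNIV"
    using countableE_infinite[OF countableI_type assms(2)] by blast
  have "bij_betw (inv_into T eT) UNIV T" using eT by (rule bij_betw_inv_into)
  then have "bij_betw (inv_into T eT \<circ> eS) S T" using eS by (intro bij_betw_trans) 
  then show ?thesis by blast
qed

lemma move_lemma:
  fixes Y S T :: "'b::countable set"
  assumes ST: "S \<subseteq> Y" "T \<subseteq> Y" and inf: "infinite S" "infinite T" "infinite (Y - S)" "infinite (Y - T)"
  shows "\<exists>w. w \<in> SymS Y \<and> w ` S = T"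
proof -
  obtain f1 where f1: "bij_betw f1 S T" using bij_inf[OF inf(1,2)] by blast
  obtain f2 where f2: "bij_betw f2 (Y - S) (Y - T)" using bij_inf[OF inf(3,4)] by blast
  define w where "w x = (if x \<in> S then f1 x else if x \<in> Y then f2 x else x)" for x
  have b1: "bij_betw w S T" using f1 by (rule bij_betw_cong[THEN iffD1, rotated]) (auto simp: w_def)
  have b2: "bij_betw w (Y - S) (Y - T)" using f2 by (rule bij_betw_cong[THEN iffD1, rotated]) (auto simp: w_def)
  have b3: "bij_betw w (- Y) (- Y)" by (rule bij_betw_cong[THEN iffD1, rotated, OF bij_betw_id]) (use ST in \<open>auto simp: w_def\<close>)
  have disj: "(T \<union> (Y - T)) \<inter> - Y = {}" using ST by blast
  have "bij_betw w (S \<union> (Y - S)) (T \<union> (Y - T))" using b1 b2 by (rule bij_betw_combine) blast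
  then have "bij_betw w (S \<union> (Y - S) \<union> - Y) (T \<union> (Y - T) \<union> - Y)" using b3 disj by (rule bij_betw_combine)
  moreover have "S \<union> (Y - S) \<union> - Y = UNIV" "T \<union> (Y - T) \<union> - Y = UNIV" using ST by blast+
  ultimately have "bij w" by simp
  moreover have "\<forall>x. x \<notin> Y \<longrightarrow> w x = x" using ST by (auto simp: w_def)
  moreover have "w ` S = T" using b1 by (simp add: bij_betw_def)
  ultimately show ?thesis unfolding SymS_def by blast
qed

lemma split_inf:
  fixes S :: "'b::countable set"
  assumes "infinite S"
  shows "\<exists>S1 S2. S1 \<union> S2 = S \<and> S1 \<inter> S2 = {} \<and> infinite S1 \<and> infinite S2"
proof -
  obtain e :: "'b \<Rightarrow> nat" where e: "bij_betw e S UNIV"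
    using countableE_infinite[OF countableI_type assms] by blast
  define S1 where "S1 = {x\<in>S. even (e x)}"
  define S2 where "S2 = {x\<in>S. odd (e x)}"
  have im: "e ` S = UNIV" using e by (simp add: bij_betw_def)
  have "e ` S1 = {n. even n}" unfolding S1_def using im by auto
  moreover have "e ` S2 = {n. odd n}" unfolding S2_def using im by auto
  moreover have "infinite {n::nat. even n}"
  proof -
    have "{n::nat. even n} = (\<lambda>n. 2*n) ` UNIV" by (auto elim!: evenE)
    moreover have "inj (\<lambda>n::nat. 2*n)" by (auto simp: inj_def)
    ultimately show ?thesis using range_inj_infinite by metis
  qed
  moreover have "infinite {n::nat. odd n}"
  proof -
    have "{n::nat. odd n} = (\<lambda>n. 2*n+1) ` UNIV" by (auto elim!: oddE)
    moreover have "inj (\<lambda>n::nat. 2*n+1)" by (auto simp: inj_def)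
    ultimately show ?thesis using range_inj_infinite by metis
  qed
  ultimately have "infinite S1" "infinite S2" by (metis finite_imageI)+
  moreover have "S1 \<union> S2 = S" "S1 \<inter> S2 = {}" unfolding S1_def S2_def by auto
  ultimately show ?thesis by blast
qed

lemma SymS_inv:
  assumes "f \<in> SymS Y" shows "iv f \<in> SymS Y"
proof -
  have b: "bij f" and fx: "\<And>x. x \<notin> Y \<Longrightarrow> f x = x" using assms by (auto simp: SymS_def)
  have "iv f x = x" if "x \<notin> Y" for x
  proof -
    have "iv f (f x) = x" using b by (simp add: bij_is_inj inv_f_f)
    then show ?thesis using fx[OF that] by simp
  qed
  then show ?thesis using b by (simp add: SymS_def bij_imp_bij_inv)
qed

lemma glue:
  assumes h: "bij h" and hZ: "h ` Z = Z"
  shows "\<exists>u v. u \<in> SymS Z \<and> v \<in> SymS (- Z) \<and> h = u \<circ> v"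
proof -
  define u where "u x = (if x \<in> Z then h x else x)" for x
  define v where "v x = (if x \<in> Z then x else h x)" for x
  have iZ: "inj_on h Z" using bij_is_inj[OF h] by (rule inj_on_subset) simp
  have bZ: "bij_betw h Z Z" unfolding bij_betw_def using iZ hZ by (rule conjI)
  have hC: "h ` (- Z) = - Z" using h hZ by (simp add: bij_image_Compl_eq)
  have iC: "inj_on h (- Z)" using bij_is_inj[OF h] by (rule inj_on_subset) simp
  have bC: "bij_betw h (- Z) (- Z)" unfolding bij_betw_def using iC hC by (rule conjI)
  have "bij_betw u (Z \<union> - Z) (Z \<union> - Z)"
    by (rule bij_betw_combine[OF bij_betw_cong[THEN iffD1, OF _ bZ] bij_betw_cong[THEN iffD1, OF _ bij_betw_id]])
       (auto simp: u_def)
  then have bu: "bij u" by simp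
  have "bij_betw v (Z \<union> - Z) (Z \<union> - Z)"
    by (rule bij_betw_combine[OF bij_betw_cong[THEN iffD1, OF _ bij_betw_id] bij_betw_cong[THEN iffD1, OF _ bC]])
       (auto simp: v_def)
  then have bv: "bij v" by simp
  have "h = u \<circ> v"
  proof
    fix x show "h x = (u \<circ> v) x"
    proof (cases "x \<in> Z")
      case True then show ?thesis by (simp add: u_def v_def)
    next
      case False
      then have "h x \<in> - Z" using hC by blast
      then show ?thesis using False by (simp add: u_def v_def)
    qed
  qed
  moreover have "u \<in> SymS Z" using bu by (simp add: SymS_def u_def)
  moreover have "v \<in> SymS (- Z)" using bv by (simp add: SymS_def v_def)
  ultimately show ?thesis by blast
qed


lemma SymS_mono: "Y \<subseteq> Y' \<Longrightarrow> SymS Y \<subseteq> SymS Y'"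
  unfolding SymS_def by blast

lemma SymS_fix_image: "w \<in> SymS Y \<Longrightarrow> A \<inter> Y = {} \<Longrightarrow> w ` A = A"
  unfolding SymS_def by (auto simp: image_iff) (metis disjoint_iff)

lemma SymS_id: "id \<in> SymS Y"
  unfolding SymS_def by simp

lemma SymS_bij: "w \<in> SymS Y \<Longrightarrow> bij w"
  unfolding SymS_def by simp

lemma decomp:
  fixes Y1 Y2 :: "'b::countable set"
  assumes U: "Y1 \<union> Y2 = UNIV" and iP: "infinite (Y1 - Y2)" and iQ: "infinite (Y2 - Y1)"
    and iI: "infinite (Y1 \<inter> Y2)" and g: "bij g"
  shows "\<exists>a1 a2 a3 a4 a5. a1 \<in> SymS Y1 \<and> a2 \<in> SymS Y2 \<and> a3 \<in> SymS Y1 \<and> a4 \<in> SymS Y1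
     \<and> a5 \<in> SymS Y2 \<and> g = a1 \<circ> a2 \<circ> a3 \<circ> a4 \<circ> a5"
proof -
  obtain I1 I2 where I: "I1 \<union> I2 = Y1 \<inter> Y2" "I1 \<inter> I2 = {}" "infinite I1" "infinite I2"
    using split_inf[OF iI] by blast
  define P where "P = Y1 - Y2"
  define Z where "Z = P \<union> I1"
  define E where "E = g ` Z"
  have I1Y: "I1 \<subseteq> Y1" "I1 \<subseteq> Y2" and I2Y: "I2 \<subseteq> Y1" "I2 \<subseteq> Y2" using I(1) by blast+
  have ginj: "inj g" using g by (rule bij_is_inj)
  have infZ: "infinite Z" using infinite_super[OF _ iP, of Z] unfolding Z_def P_def by blast
  have infE: "infinite E" unfolding E_def using infZ ginj by (simp add: finite_image_iff inj_on_subset)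
  have cE: "- E = g ` (- Z)" unfolding E_def using g by (simp add: bij_image_Compl_eq)
  have I2Z: "I2 \<subseteq> - Z" using I(2) I2Y unfolding Z_def P_def by blast
  have infcZ: "infinite (- Z)" by (rule infinite_super[OF I2Z I(4)])
  have infcE: "infinite (- E)" unfolding cE using infcZ ginj by (simp add: finite_image_iff inj_on_subset)
  have iY1I1: "infinite (Y1 - I1)"
  proof -
    have "Y1 - Y2 \<subseteq> Y1 - I1" using I1Y by blast
    then show ?thesis using iP by (rule infinite_super)
  qed
  have iY2I1: "infinite (Y2 - I1)"
  proof -
    have "Y2 - Y1 \<subseteq> Y2 - I1" using I1Y by blast
    then show ?thesis using iQ by (rule infinite_super)
  qed
  have step1: "\<exists>w1. w1 \<in> SymS Y1 \<and> infinite (w1 ` E \<inter> Y2) \<and> infinite (Y2 - w1 ` E)"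
  proof (cases "infinite (E \<inter> Y1) \<and> infinite (Y1 - E)")
    case True
    have s1: "E \<inter> Y1 \<subseteq> Y1" by blast
    have eq: "Y1 - E \<inter> Y1 = Y1 - E" by blast
    have i1: "infinite (E \<inter> Y1)" using True by (rule conjunct1)
    have i2: "infinite (Y1 - E \<inter> Y1)" unfolding eq using True by (rule conjunct2)
    obtain w where w: "w \<in> SymS Y1" "w ` (E \<inter> Y1) = I1"
      using move_lemma[OF s1 I1Y(1) i1 I(3) i2 iY1I1] by blast
    have "(E - Y1) \<inter> Y1 = {}" by blast
    then have wo: "w ` (E - Y1) = E - Y1" by (rule SymS_fix_image[OF w(1)])
    have "w ` E = w ` (E \<inter> Y1) \<union> w ` (E - Y1)" by blast
    then have wE: "w ` E = I1 \<union> (E - Y1)" unfolding w(2) wo .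
    have "I1 \<subseteq> w ` E \<inter> Y2" using wE I1Y by blast
    then have a: "infinite (w ` E \<inter> Y2)" using I(3) by (rule infinite_super)
    have "I2 \<subseteq> Y2 - w ` E" using wE I(2) I2Y by blast
    then have b: "infinite (Y2 - w ` E)" using I(4) by (rule infinite_super)
    show ?thesis using w(1) a b by blast
  next
    case False
    have "infinite (E \<inter> Y2) \<and> infinite (Y2 - E)"
    proof (cases "finite (E \<inter> Y1)")
      case True
      have "E - (E \<inter> Y1) \<subseteq> E \<inter> Y2" using U by blast
      moreover have "infinite (E - (E \<inter> Y1))" using infE True by simp
      ultimately have a: "infinite (E \<inter> Y2)" by (rule infinite_super)
      have "(Y1 \<inter> Y2) - (E \<inter> Y1) \<subseteq> Y2 - E" by blast
      moreover have "infinite ((Y1 \<inter> Y2) - (E \<inter> Y1))" using iI True by simp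
      ultimately have b: "infinite (Y2 - E)" by (rule infinite_super)
      show ?thesis using a b by (rule conjI)
    next
      case F2: False
      have fY: "finite (Y1 - E)" using False F2 by blast
      have sub: "- E \<subseteq> (Y1 - E) \<union> (Y2 - E)" using U by blast
      have b: "infinite (Y2 - E)"
      proof
        assume "finite (Y2 - E)"
        then have "finite ((Y1 - E) \<union> (Y2 - E))" using fY by simp
        then have "finite (- E)" using sub by (rule finite_subset[rotated])
        then show False using infcE by simp
      qed
      have "(Y1 \<inter> Y2) - (Y1 - E) \<subseteq> E \<inter> Y2" by blast
      moreover have "infinite ((Y1 \<inter> Y2) - (Y1 - E))" using iI fY by simp
      ultimately have a: "infinite (E \<inter> Y2)" by (rule infinite_super)
      show ?thesis using a b by (rule conjI)
    qed
    then show ?thesis using SymS_id[of Y1] by (intro exI[of _ id]) simp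
  qed
  then obtain w1 where w1: "w1 \<in> SymS Y1" "infinite (w1 ` E \<inter> Y2)" "infinite (Y2 - w1 ` E)"
    by blast
  define E' where "E' = w1 ` E"
  have s2: "E' \<inter> Y2 \<subseteq> Y2" by blast
  have i3: "infinite (E' \<inter> Y2)" using w1(2) unfolding E'_def .
  have eq2: "Y2 - E' \<inter> Y2 = Y2 - E'" by blast
  have i4: "infinite (Y2 - E' \<inter> Y2)" unfolding eq2 using w1(3) unfolding E'_def .
  obtain w2 where w2: "w2 \<in> SymS Y2" "w2 ` (E' \<inter> Y2) = I1"
    using move_lemma[OF s2 I1Y(2) i3 I(3) i4 iY2I1] by blast
  have "(E' - Y2) \<inter> Y2 = {}" by blast
  then have wo2: "w2 ` (E' - Y2) = E' - Y2" by (rule SymS_fix_image[OF w2(1)])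
  have "w2 ` E' = w2 ` (E' \<inter> Y2) \<union> w2 ` (E' - Y2)" by blast
  then have wE': "w2 ` E' = I1 \<union> (E' - Y2)" unfolding w2(2) wo2 .
  have E''Y1: "w2 ` E' \<subseteq> Y1" using wE' I1Y U by blast
  have ZY1: "Z \<subseteq> Y1" unfolding Z_def P_def using I1Y by blast
  have "I1 \<subseteq> w2 ` E'" using wE' by blast
  then have infE'': "infinite (w2 ` E')" using I(3) by (rule infinite_super)
  have "I2 \<subseteq> Y1 - w2 ` E'" using wE' I(2) I2Y by blast
  then have i1: "infinite (Y1 - w2 ` E')" using I(4) by (rule infinite_super)
  have "I2 \<subseteq> Y1 - Z" using I2Z I2Y by blast
  then have i2: "infinite (Y1 - Z)" using I(4) by (rule infinite_super)
  obtain w3 where w3: "w3 \<in> SymS Y1" "w3 ` (w2 ` E') = Z"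
    using move_lemma[OF E''Y1 ZY1 infE'' infZ i1 i2] by blast
  define h where "h = w3 \<circ> w2 \<circ> w1 \<circ> g"
  have bw: "bij w1" "bij w2" "bij w3" using w1(1) w2(1) w3(1) by (simp_all add: SymS_bij)
  have bh: "bij h" unfolding h_def using bw g by (intro bij_comp) 
  have "h ` Z = w3 ` (w2 ` (w1 ` (g ` Z)))" unfolding h_def by (simp add: image_comp)
  then have hZ: "h ` Z = Z" using w3(2) unfolding E'_def E_def by simp
  obtain u v where uv: "u \<in> SymS Z" "v \<in> SymS (- Z)" "h = u \<circ> v" using glue[OF bh hZ] by blast
  have uY: "u \<in> SymS Y1" using uv(1) SymS_mono[OF ZY1] by blast
  have "- Z \<subseteq> Y2" unfolding Z_def P_def using U by blast
  then have vY: "v \<in> SymS Y2" using uv(2) SymS_mono by blast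
  have c1: "iv w1 \<circ> w1 = id" "iv w2 \<circ> w2 = id" "iv w3 \<circ> w3 = id"
    using bw by (simp_all add: inv_o_cancel bij_is_inj)
  have "iv w1 \<circ> iv w2 \<circ> iv w3 \<circ> h = iv w1 \<circ> ((iv w2 \<circ> ((iv w3 \<circ> w3) \<circ> w2)) \<circ> w1) \<circ> g"
    unfolding h_def by (simp add: comp_assoc)
  also have "\<dots> = g" using c1 by simp
  finally have "g = iv w1 \<circ> iv w2 \<circ> iv w3 \<circ> u \<circ> v" using uv(3) by (simp add: comp_assoc)
  then show ?thesis using SymS_inv[OF w1(1)] SymS_inv[OF w2(1)] SymS_inv[OF w3(1)] uY vY by blast
qed


context
  fixes K :: "('b \<Rightarrow> 'b) set"
  assumes Kb: "K \<subseteq> carrier SymG"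
begin

lemma gen_bij: "f \<in> generate SymG K \<Longrightarrow> bij f"
  using group.generate_in_carrier[OF group_SymG Kb] carrier_SymG by blast

lemma gen_comp: "f \<in> generate SymG K \<Longrightarrow> g \<in> generate SymG K \<Longrightarrow> f \<circ> g \<in> generate SymG K"
  using generate.eng[of f SymG K g] mult_SymG gen_bij by metis

lemma gen_inv: "f \<in> generate SymG K \<Longrightarrow> iv f \<in> generate SymG K"
  using group.generate_m_inv_closed[OF group_SymG Kb] inv_SymG gen_bij by metis

lemma gen_incl: "f \<in> K \<Longrightarrow> f \<in> generate SymG K"
  by (rule generate.incl)

end

lemma bij_inv_comp: "bij f \<Longrightarrow> f \<circ> iv f = id" "bij f \<Longrightarrow> iv f \<circ> f = id"
  by (simp_all add: bij_is_surj bij_is_inj inv_o_cancel flip: surj_iff)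

type_synonym trip = "int \<times> int \<times> nat"

lemma trip_ext: "(\<And>n i k. f (n,i,k) = g (n,i,k)) \<Longrightarrow> f = (g :: trip \<Rightarrow> 'c)"
  by (rule ext) (metis prod_cases3)

definition sh :: "int \<Rightarrow> trip \<Rightarrow> trip" where
  "sh m = (\<lambda>(n,i,k). (n+m,i,k))"
definition sgm :: "trip \<Rightarrow> trip" where
  "sgm = (\<lambda>(n,i,k). if n = 0 then (n,i+1,k) else (n,i,k))"
definition sgm' :: "trip \<Rightarrow> trip" where
  "sgm' = (\<lambda>(n,i,k). if n = 0 then (n,i-1,k) else (n,i,k))"
definition uB :: "(nat \<Rightarrow> nat) \<Rightarrow> trip \<Rightarrow> trip" where
  "uB \<mu> = (\<lambda>(n,i,k). if n = 0 \<and> i = 0 then (n,i,\<mu> k) else (n,i,k))"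
definition XX :: "(nat \<Rightarrow> nat \<Rightarrow> nat) \<Rightarrow> trip \<Rightarrow> trip" where
  "XX M = (\<lambda>(n,i,k). if n \<ge> 0 \<and> i \<ge> 0 then (n,i,M (nat n) k) else (n,i,k))"
definition ZZ :: "(nat \<Rightarrow> nat \<Rightarrow> nat) \<Rightarrow> nat \<Rightarrow> trip \<Rightarrow> trip" where
  "ZZ M j = (\<lambda>(n,i,k). if n + int j \<ge> 0 \<and> i \<ge> 0 then (n,i,M (nat (n + int j)) k) else (n,i,k))"
definition Bset :: "trip set" where
  "Bset = range (\<lambda>k. (0,0,k))"

lemma sh_simp[simp]: "sh m (n,i,k) = (n+m,i,k)" by (simp add: sh_def)
lemma sgm_simp[simp]: "sgm (n,i,k) = (if n = 0 then (n,i+1,k) else (n,i,k))" by (simp add: sgm_def)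
lemma sgm'_simp[simp]: "sgm' (n,i,k) = (if n = 0 then (n,i-1,k) else (n,i,k))" by (simp add: sgm'_def)
lemma uB_simp[simp]: "uB \<mu> (n,i,k) = (if n = 0 \<and> i = 0 then (n,i,\<mu> k) else (n,i,k))" by (simp add: uB_def)
lemma XX_simp[simp]: "XX M (n,i,k) = (if n \<ge> 0 \<and> i \<ge> 0 then (n,i,M (nat n) k) else (n,i,k))" by (simp add: XX_def)
lemma ZZ_simp[simp]: "ZZ M j (n,i,k) = (if n + int j \<ge> 0 \<and> i \<ge> 0 then (n,i,M (nat (n + int j)) k) else (n,i,k))"
  by (simp add: ZZ_def)

lemma sh_comp: "sh a \<circ> sh b = sh (a + b)"
  by (rule trip_ext) (simp add: add.assoc add.commute)
lemma sh_0: "sh 0 = id"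
  by (rule trip_ext) simp
lemma bij_sh: "bij (sh m)"
  using o_bij[of "sh (-m)" "sh m"] sh_comp[of m "-m"] sh_comp[of "-m" m] sh_0 by simp
lemma iv_sh: "iv (sh m) = sh (- m)"
  using inv_unique_comp[of "sh m" "sh (-m)"] sh_comp[of m "-m"] sh_comp[of "-m" m] sh_0 by simp
lemma bij_sgm: "bij sgm"
proof (rule o_bij[of sgm'])
  show "sgm' \<circ> sgm = id" by (rule trip_ext) simp
  show "sgm \<circ> sgm' = id" by (rule trip_ext) simp
qed
lemma bij_XX: assumes "\<And>m. bij (M m)" shows "bij (XX M)"
proof (rule o_bij[of "XX (\<lambda>m. iv (M m))"])
  have a: "iv (M m) (M m k) = k" "M m (iv (M m) k) = k" for m k
    using assms[of m] by (simp_all add: bij_is_inj bij_is_surj surj_f_inv_f)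
  show "XX (\<lambda>m. iv (M m)) \<circ> XX M = id" by (rule trip_ext) (simp add: a)
  show "XX M \<circ> XX (\<lambda>m. iv (M m)) = id" by (rule trip_ext) (simp add: a)
qed
lemma bij_uB: assumes "bij \<mu>" shows "bij (uB \<mu>)"
proof (rule o_bij[of "uB (iv \<mu>)"])
  have a: "iv \<mu> (\<mu> k) = k" "\<mu> (iv \<mu> k) = k" for k
    using assms by (simp_all add: bij_is_inj bij_is_surj surj_f_inv_f)
  show "uB (iv \<mu>) \<circ> uB \<mu> = id" by (rule trip_ext) (simp add: a)
  show "uB \<mu> \<circ> uB (iv \<mu>) = id" by (rule trip_ext) (simp add: a)
qed
lemma ZZ_eq: "sh (- int j) \<circ> XX M \<circ> sh (int j) = ZZ M j"
  by (rule trip_ext) simp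
lemma ZZ_comm: "ZZ M j \<circ> sgm = uB (M j) \<circ> sgm \<circ> ZZ M j"
  by (rule trip_ext) auto

lemma SymB_uB:
  assumes a: "a \<in> SymS Bset"
  shows "\<exists>\<mu>. bij \<mu> \<and> a = uB \<mu>"
proof -
  have ba: "bij a" and fx: "\<And>x. x \<notin> Bset \<Longrightarrow> a x = x" using a by (auto simp: SymS_def)
  have inB: "a x \<in> Bset" if "x \<in> Bset" for x
  proof (rule ccontr)
    assume "a x \<notin> Bset"
    then have "a (a x) = a x" by (rule fx)
    then have "a x = x" using ba by (simp add: bij_is_inj inj_eq)
    then show False using that \<open>a x \<notin> Bset\<close> by simp
  qed
  define \<mu> where "\<mu> k = snd (snd (a (0,0,k)))" for k
  have aB: "a (0,0,k) = (0,0,\<mu> k)" for k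
  proof -
    have "a (0,0,k) \<in> Bset" by (rule inB) (simp add: Bset_def)
    then show ?thesis unfolding \<mu>_def Bset_def by auto
  qed
  have "inj \<mu>"
  proof (rule injI)
    fix k k' assume "\<mu> k = \<mu> k'"
    then have "a (0,0,k) = a (0,0,k')" using aB by simp
    then show "k = k'" using ba by (simp add: bij_is_inj inj_eq)
  qed
  moreover have "surj \<mu>"
  unfolding surj_def
  proof
    fix k'
    obtain x where x: "a x = (0,0,k')" using ba by (metis bij_is_surj surj_f_inv_f)
    have "x \<in> Bset"
    proof (rule ccontr)
      assume "x \<notin> Bset"
      then have "a x = x" by (rule fx)
      then have "x = (0,0,k')" using x by simp
      moreover have "(0,0,k') \<in> Bset" unfolding Bset_def by (rule rangeI)
      ultimately show False using \<open>x \<notin> Bset\<close> by simp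
    qed
    then obtain k where "x = (0,0,k)" by (auto simp: Bset_def)
    then show "\<exists>k. k' = \<mu> k" using x aB by auto
  qed
  ultimately have "bij \<mu>" by (rule bijI)
  moreover have "a = uB \<mu>"
  proof (rule trip_ext)
    fix n i k
    show "a (n,i,k) = uB \<mu> (n,i,k)"
    proof (cases "n = 0 \<and> i = 0")
      case True then show ?thesis using aB by simp
    next
      case False
      then have "(n,i,k) \<notin> Bset" by (auto simp: Bset_def)
      then show ?thesis using False fx[of "(n,i,k)"] by auto
    qed
  qed
  ultimately show ?thesis by blast
qed

lemma conj_SymS:
  assumes c: "bij c" and cB: "c ` B = Y" and a: "a \<in> SymS Y"
  shows "iv c \<circ> a \<circ> c \<in> SymS B" and "a = c \<circ> (iv c \<circ> a \<circ> c) \<circ> iv c"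
proof -
  have ba: "bij a" and fx: "\<And>x. x \<notin> Y \<Longrightarrow> a x = x" using a by (auto simp: SymS_def)
  have "bij (iv c \<circ> a \<circ> c)" using c ba by (intro bij_comp bij_imp_bij_inv) auto
  moreover have "(iv c \<circ> a \<circ> c) x = x" if "x \<notin> B" for x
  proof -
    have "c x \<notin> Y"
    proof
      assume "c x \<in> Y"
      then obtain y where "y \<in> B" "c x = c y" using cB by blast
      then have "x = y" using c by (simp add: bij_is_inj inj_eq)
      then show False using that \<open>y \<in> B\<close> by simp
    qed
    then have "a (c x) = c x" by (rule fx)
    then show ?thesis using c by (simp add: bij_is_inj inv_f_f)
  qed
  ultimately show "iv c \<circ> a \<circ> c \<in> SymS B" by (simp add: SymS_def)
  have "c \<circ> (iv c \<circ> a \<circ> c) \<circ> iv c = (c \<circ> iv c) \<circ> a \<circ> (c \<circ> iv c)" by (simp add: comp_assoc)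
  also have "\<dots> = a" using bij_inv_comp(1)[OF c] by simp
  finally show "a = c \<circ> (iv c \<circ> a \<circ> c) \<circ> iv c" by simp
qed

lemma inf_range: "inj (f :: nat \<Rightarrow> 'c) \<Longrightarrow> range f \<subseteq> S \<Longrightarrow> infinite S"
  using range_inj_infinite infinite_super by blast


lemma bij_inv_comp2: "bij f \<Longrightarrow> f \<circ> (iv f \<circ> g) = g" "bij f \<Longrightarrow> iv f \<circ> (f \<circ> g) = g"
  by (simp_all add: comp_assoc[symmetric] bij_inv_comp)

lemma galvin_T:
  fixes C :: "(trip \<Rightarrow> trip) set"
  assumes cC: "countable C" and Cc: "C \<subseteq> carrier SymG"
  shows "\<exists>U. finite U \<and> U \<subseteq> carrier SymG \<and> C \<subseteq> generate SymG U"
proof -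
  define Y1 :: "trip set" where "Y1 = {x. fst x \<le> 1}"
  define Y2 :: "trip set" where "Y2 = {x. fst x \<ge> 0}"
  have U12: "Y1 \<union> Y2 = UNIV" by (auto simp: Y1_def Y2_def)
  have injk: "inj (\<lambda>k::nat. (a::int, b::int, k))" for a b by (auto simp: inj_def)
  have iP: "infinite (Y1 - Y2)" by (rule inf_range[OF injk[of "-1" 0]]) (auto simp: Y1_def Y2_def)
  have iQ: "infinite (Y2 - Y1)" by (rule inf_range[OF injk[of 2 0]]) (auto simp: Y1_def Y2_def)
  have iI: "infinite (Y1 \<inter> Y2)" by (rule inf_range[OF injk[of 0 0]]) (auto simp: Y1_def Y2_def)
  have iB: "infinite Bset" by (rule inf_range[OF injk[of 0 0]]) (auto simp: Bset_def)
  have icB: "infinite (UNIV - Bset)" by (rule inf_range[OF injk[of 1 0]]) (auto simp: Bset_def)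
  have iY1: "infinite Y1" by (rule inf_range[OF injk[of 0 0]]) (auto simp: Y1_def)
  have icY1: "infinite (UNIV - Y1)" by (rule inf_range[OF injk[of 2 0]]) (auto simp: Y1_def)
  have iY2: "infinite Y2" by (rule inf_range[OF injk[of 0 0]]) (auto simp: Y2_def)
  have icY2: "infinite (UNIV - Y2)" by (rule inf_range[OF injk[of "-1" 0]]) (auto simp: Y2_def)
  obtain c1 where c1: "c1 \<in> SymS UNIV" "c1 ` Bset = Y1"
    using move_lemma[OF subset_UNIV subset_UNIV iB iY1 icB icY1] by blast
  obtain c2 where c2: "c2 \<in> SymS UNIV" "c2 ` Bset = Y2"
    using move_lemma[OF subset_UNIV subset_UNIV iB iY2 icB icY2] by blast
  have bc: "bij c1" "bij c2" using c1(1) c2(1) by (simp_all add: SymS_bij)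
  define YY where "YY i = (if i = 1 \<or> i = 4 then Y2 else Y1)" for i :: nat
  define cc where "cc i = (if i = 1 \<or> i = 4 then c2 else c1)" for i :: nat
  have ccb: "bij (cc i)" for i using bc by (simp add: cc_def)
  have ccY: "cc i ` Bset = YY i" for i using c1(2) c2(2) by (simp add: cc_def YY_def)
  define Pd where "Pd g A \<longleftrightarrow> (\<forall>i<5. A i \<in> SymS (YY i)) \<and> g = A 0 \<circ> A 1 \<circ> A 2 \<circ> A 3 \<circ> A 4"
    for g :: "trip \<Rightarrow> trip" and A :: "nat \<Rightarrow> trip \<Rightarrow> trip"
  have exA: "\<exists>A. Pd g A" if "g \<in> C" for g
  proof -
    have "bij g" using that Cc carrier_SymG by blast
    then obtain a1 a2 a3 a4 a5 where a: "a1 \<in> SymS Y1" "a2 \<in> SymS Y2" "a3 \<in> SymS Y1" "a4 \<in> SymS Y1"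
      "a5 \<in> SymS Y2" "g = a1 \<circ> a2 \<circ> a3 \<circ> a4 \<circ> a5"
      using decomp[OF U12 iP iQ iI] by blast
    define A where "A i = [a1,a2,a3,a4,a5] ! i" for i
    have "\<forall>i<5. A i \<in> SymS (YY i)"
    proof (intro allI impI)
      fix i :: nat assume "i < 5"
      then have "i = 0 \<or> i = 1 \<or> i = 2 \<or> i = 3 \<or> i = 4" by arith
      then show "A i \<in> SymS (YY i)" using a by (auto simp: A_def YY_def)
    qed
    moreover have "g = A 0 \<circ> A 1 \<circ> A 2 \<circ> A 3 \<circ> A 4" using a(6) by (simp add: A_def)
    ultimately show ?thesis unfolding Pd_def by blast
  qed
  have "\<forall>g\<in>C. \<exists>A. Pd g A" using exA by blast
  from bchoice[OF this] obtain DA where DA: "\<forall>g\<in>C. Pd g (DA g)" by blast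
  define NB where "NB = insert id ((\<lambda>(g,i). iv (cc i) \<circ> DA g i \<circ> cc i) ` (C \<times> {..<5::nat}))"
  have NBS: "NB \<subseteq> SymS Bset"
  proof
    fix b assume "b \<in> NB"
    then consider "b = id" | g i where "g \<in> C" "i < 5" "b = iv (cc i) \<circ> DA g i \<circ> cc i"
      unfolding NB_def by auto
    then show "b \<in> SymS Bset"
    proof cases
      case 1 then show ?thesis by (simp add: SymS_id)
    next
      case (2 g i)
      have "DA g i \<in> SymS (YY i)" using DA 2(1,2) unfolding Pd_def by blast
      then show ?thesis using conj_SymS(1)[OF ccb ccY] 2(3) by blast
    qed
  qed
  have "countable (C \<times> {..<5::nat})" using countable_SIGMA[OF cC, of "\<lambda>_. {..<5::nat}"] by simp
  then have cNB: "countable NB" unfolding NB_def by simp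
  define en where "en = from_nat_into NB"
  have ren: "range en = NB" unfolding en_def using cNB by (simp add: NB_def)
  have "\<forall>m. \<exists>\<mu>. bij \<mu> \<and> en m = uB \<mu>"
  proof
    fix m
    have "en m \<in> SymS Bset" using ren NBS by blast
    then show "\<exists>\<mu>. bij \<mu> \<and> en m = uB \<mu>" by (rule SymB_uB)
  qed
  from choice[OF this] obtain M where M: "\<forall>m. bij (M m) \<and> en m = uB (M m)" by blast
  have Mb: "bij (M m)" for m using M by blast
  define K where "K = {XX M, sh 1, sgm, c1, c2}"
  have Kc: "K \<subseteq> carrier SymG" using bij_XX[OF Mb] bij_sh bij_sgm bc by (auto simp: K_def carrier_SymG)
  let ?G = "generate SymG K"
  have s1: "sh 1 \<in> ?G" by (rule gen_incl[OF Kc]) (simp add: K_def)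
  have XG: "XX M \<in> ?G" by (rule gen_incl[OF Kc]) (simp add: K_def)
  have sgG: "sgm \<in> ?G" by (rule gen_incl[OF Kc]) (simp add: K_def)
  have c1G: "c1 \<in> ?G" by (rule gen_incl[OF Kc]) (simp add: K_def)
  have c2G: "c2 \<in> ?G" by (rule gen_incl[OF Kc]) (simp add: K_def)
  have ccG: "cc i \<in> ?G" for i using c1G c2G by (simp add: cc_def)
  have shG: "sh (int j) \<in> ?G \<and> sh (- int j) \<in> ?G" for j
  proof (induction j)
    case 0
    have "sh 0 \<in> ?G" using generate.one[of SymG K] by (simp add: one_SymG sh_0)
    then show ?case by simp
  next
    case (Suc j)
    have a: "sh 1 \<circ> sh (int j) \<in> ?G" using gen_comp[OF Kc s1] Suc.IH by blast
    have a': "sh 1 \<circ> sh (int j) = sh (int (Suc j))" by (simp add: sh_comp add.commute)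
    have b: "iv (sh 1) \<circ> sh (- int j) \<in> ?G" using gen_comp[OF Kc gen_inv[OF Kc s1]] Suc.IH by blast
    have b': "iv (sh 1) \<circ> sh (- int j) = sh (- int (Suc j))" by (simp add: iv_sh sh_comp)
    show ?case using a a' b b' by simp
  qed
  have ZG: "ZZ M j \<in> ?G" for j
  proof -
    have "sh (- int j) \<circ> XX M \<in> ?G" using gen_comp[OF Kc _ XG] shG by blast
    then have "sh (- int j) \<circ> XX M \<circ> sh (int j) \<in> ?G" using gen_comp[OF Kc] shG by blast
    then show ?thesis by (simp add: ZZ_eq)
  qed
  have uG: "uB (M j) \<in> ?G" for j
  proof -
    have bZ: "bij (ZZ M j)" using gen_bij[OF Kc ZG] .
    have "ZZ M j \<circ> sgm \<circ> iv (ZZ M j) \<circ> iv sgm = (uB (M j) \<circ> sgm \<circ> ZZ M j) \<circ> iv (ZZ M j) \<circ> iv sgm"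
      by (simp only: ZZ_comm)
    also have "\<dots> = uB (M j)"
      by (simp add: comp_assoc bij_inv_comp2 bZ bij_sgm bij_inv_comp(1)[OF bij_sgm])
    finally have eq: "ZZ M j \<circ> sgm \<circ> iv (ZZ M j) \<circ> iv sgm = uB (M j)" .
    have "ZZ M j \<circ> sgm \<in> ?G" using gen_comp[OF Kc ZG sgG] .
    then have "ZZ M j \<circ> sgm \<circ> iv (ZZ M j) \<in> ?G" using gen_comp[OF Kc _ gen_inv[OF Kc ZG]] by blast
    then have "ZZ M j \<circ> sgm \<circ> iv (ZZ M j) \<circ> iv sgm \<in> ?G" using gen_comp[OF Kc _ gen_inv[OF Kc sgG]] by blast
    then show ?thesis using eq by simp
  qed
  have NBG: "NB \<subseteq> ?G"
  proof
    fix b assume "b \<in> NB"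
    then obtain m where "b = en m" using ren by blast
    then show "b \<in> ?G" using uG[of m] M by simp
  qed
  have "C \<subseteq> ?G"
  proof
    fix g assume g: "g \<in> C"
    have P: "Pd g (DA g)" using DA g by blast
    have Ai: "DA g i \<in> ?G" if "i < 5" for i
    proof -
      have a: "DA g i \<in> SymS (YY i)" using P that unfolding Pd_def by blast
      have "iv (cc i) \<circ> DA g i \<circ> cc i \<in> NB" unfolding NB_def
        by (rule insertI2, rule image_eqI[where x="(g,i)"]) (simp_all add: g that)
      then have b: "iv (cc i) \<circ> DA g i \<circ> cc i \<in> ?G" using NBG by blast
      have e: "DA g i = cc i \<circ> (iv (cc i) \<circ> DA g i \<circ> cc i) \<circ> iv (cc i)"
        by (rule conj_SymS(2)[OF ccb ccY a])
      have "cc i \<circ> (iv (cc i) \<circ> DA g i \<circ> cc i) \<in> ?G" using gen_comp[OF Kc ccG b] .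
      then have "cc i \<circ> (iv (cc i) \<circ> DA g i \<circ> cc i) \<circ> iv (cc i) \<in> ?G"
        using gen_comp[OF Kc _ gen_inv[OF Kc ccG]] by blast
      then show ?thesis using e by simp
    qed
    have eg: "g = DA g 0 \<circ> DA g 1 \<circ> DA g 2 \<circ> DA g 3 \<circ> DA g 4" using P unfolding Pd_def by blast
    have "DA g 0 \<circ> DA g 1 \<in> ?G" using gen_comp[OF Kc Ai Ai] by simp
    then have "DA g 0 \<circ> DA g 1 \<circ> DA g 2 \<in> ?G" using gen_comp[OF Kc _ Ai] by simp
    then have "DA g 0 \<circ> DA g 1 \<circ> DA g 2 \<circ> DA g 3 \<in> ?G" using gen_comp[OF Kc _ Ai] by simp
    then have "DA g 0 \<circ> DA g 1 \<circ> DA g 2 \<circ> DA g 3 \<circ> DA g 4 \<in> ?G" using gen_comp[OF Kc _ Ai] by simp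
    then show "g \<in> ?G" using eg by simp
  qed
  moreover have "finite K" by (simp add: K_def)
  ultimately show ?thesis using Kc by blast
qed

lemma galvin:
  fixes C :: "('a::countable \<Rightarrow> 'a) set"
  assumes inf: "infinite (UNIV :: 'a set)" and cC: "countable C" and Cc: "C \<subseteq> carrier SymG"
  shows "\<exists>U. finite U \<and> U \<subseteq> carrier SymG \<and> C \<subseteq> generate SymG U"
proof -
  obtain e1 :: "'a \<Rightarrow> nat" where e1: "bij e1"
    using countableE_infinite[OF countableI_type inf] by blast
  have infT: "infinite (UNIV :: trip set)"
    by (rule inf_range[of "\<lambda>k::nat. (0::int,0::int,k)"]) (auto simp: inj_def)
  obtain e2 :: "trip \<Rightarrow> nat" where e2: "bij e2"
    using countableE_infinite[OF countableI_type infT] by blast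
  define \<phi> where "\<phi> = inv_into UNIV e2 \<circ> e1"
  have "bij (inv_into UNIV e2)" using e2 by (rule bij_imp_bij_inv)
  then have b\<phi>: "bij \<phi>" unfolding \<phi>_def using e1 by (rule bij_comp[rotated])
  define \<psi> where "\<psi> = inv_into UNIV \<phi>"
  have b\<psi>: "bij \<psi>" unfolding \<psi>_def using b\<phi> by (rule bij_imp_bij_inv)
  have \<phi>\<psi>: "\<phi> \<circ> \<psi> = id" unfolding \<psi>_def using b\<phi> by (simp add: bij_is_surj flip: surj_iff)
  have \<psi>\<phi>: "\<psi> \<circ> \<phi> = id" unfolding \<psi>_def using b\<phi> by (simp add: bij_is_inj inv_o_cancel)
  have \<phi>\<psi>': "\<phi> (\<psi> x) = x" for x using \<phi>\<psi> by (metis comp_apply id_apply)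
  have \<psi>\<phi>': "\<psi> (\<phi> x) = x" for x using \<psi>\<phi> by (metis comp_apply id_apply)
  define cj where "cj f = \<psi> \<circ> f \<circ> \<phi>" for f :: "trip \<Rightarrow> trip"
  have bcj: "bij (cj f)" if "bij f" for f unfolding cj_def using b\<phi> b\<psi> that by (simp add: bij_comp)
  define C' where "C' = (\<lambda>g. \<phi> \<circ> g \<circ> \<psi>) ` C"
  have cC': "countable C'" unfolding C'_def using cC by simp
  have C'c: "C' \<subseteq> carrier SymG"
  proof
    fix f assume "f \<in> C'"
    then obtain g where g: "g \<in> C" "f = \<phi> \<circ> g \<circ> \<psi>" unfolding C'_def by blast
    have "bij g" using g(1) Cc carrier_SymG by blast
    then show "f \<in> carrier SymG" using g(2) b\<phi> b\<psi> by (simp add: carrier_SymG bij_comp)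
  qed
  obtain U' where U': "finite U'" "U' \<subseteq> carrier SymG" "C' \<subseteq> generate SymG U'"
    using galvin_T[OF cC' C'c] by blast
  define U where "U = cj ` U'"
  have Uc: "U \<subseteq> carrier SymG" using U'(2) bcj unfolding U_def carrier_SymG by blast
  have tr: "cj f \<in> generate SymG U" if "f \<in> generate SymG U'" for f
    using that
  proof induction
    case one
    have "cj \<one>\<^bsub>SymG\<^esub> = \<one>\<^bsub>SymG\<^esub>" by (simp add: one_SymG cj_def \<psi>\<phi>)
    then show ?case using generate.one by metis
  next
    case (incl h)
    then show ?case unfolding U_def by (intro generate.incl) simp
  next
    case (inv h)
    have bh: "bij h" using inv U'(2) carrier_SymG by blast
    have hU: "cj h \<in> U" unfolding U_def using inv by simp
    have "iv (cj h) = cj (iv h)"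
    proof (rule inv_unique_comp)
      show "cj h \<circ> cj (iv h) = id"
        by (rule ext) (simp add: cj_def \<phi>\<psi>' \<psi>\<phi>' bij_inv_comp(1)[OF bh] surj_f_inv_f bij_is_surj bh)
      show "cj (iv h) \<circ> cj h = id"
        by (rule ext) (simp add: cj_def \<phi>\<psi>' \<psi>\<phi>' inv_f_f bij_is_inj bh)
    qed
    moreover have "inv\<^bsub>SymG\<^esub> h = iv h" using bh by (rule inv_SymG)
    moreover have "inv\<^bsub>SymG\<^esub> (cj h) = iv (cj h)" using bcj[OF bh] by (rule inv_SymG)
    moreover have "inv\<^bsub>SymG\<^esub> (cj h) \<in> generate SymG U" using hU by (rule generate.inv)
    ultimately show ?case by simp
  next
    case (eng h1 h2)
    have b1: "bij h1" "bij h2"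
      using group.generate_in_carrier[OF group_SymG U'(2)] eng(1,2) carrier_SymG by blast+
    have "h1 \<otimes>\<^bsub>SymG\<^esub> h2 = h1 \<circ> h2" using b1 by (rule mult_SymG)
    moreover have "cj (h1 \<circ> h2) = cj h1 \<circ> cj h2" by (rule ext) (simp add: cj_def \<phi>\<psi>')
    moreover have "cj h1 \<otimes>\<^bsub>SymG\<^esub> cj h2 = cj h1 \<circ> cj h2" using bcj[OF b1(1)] bcj[OF b1(2)] by (rule mult_SymG)
    moreover have "cj h1 \<otimes>\<^bsub>SymG\<^esub> cj h2 \<in> generate SymG U" using eng(3,4) by (rule generate.eng)
    ultimately show ?case by metis
  qed
  have "C \<subseteq> generate SymG U"
  proof
    fix g assume g: "g \<in> C"
    have "\<phi> \<circ> g \<circ> \<psi> \<in> generate SymG U'" using g U'(3) unfolding C'_def by blast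
    then have "cj (\<phi> \<circ> g \<circ> \<psi>) \<in> generate SymG U" by (rule tr)
    moreover have "cj (\<phi> \<circ> g \<circ> \<psi>) = g" by (rule ext) (simp add: cj_def \<psi>\<phi>')
    ultimately show "g \<in> generate SymG U" by simp
  qed
  moreover have "finite U" unfolding U_def using U'(1) by simp
  ultimately show ?thesis using Uc by blast
qed


theorem theorem8p1:
  assumes inf: "infinite (UNIV :: 'a::countable set)"
  shows
    "(\<exists>G0. subgroup G0 (SymG :: ('a \<Rightarrow> 'a) monoid) \<and>
        {H. subgroup H (SymG :: ('a \<Rightarrow> 'a) monoid) \<and> H \<approx>\<^sub>S G0}
      = {H. subgroup H (SymG :: ('a \<Rightarrow> 'a) monoid) \<and> countable H})
   \<and> (\<forall>G A. subgroup G (SymG :: ('a \<Rightarrow> 'a) monoid) \<and> countable G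
        \<and> partition_on (UNIV :: 'a set) A
        \<and> (\<exists>n::nat. \<forall>\<Sigma>\<in>A. finite \<Sigma> \<and> card \<Sigma> \<le> n)
        \<and> infinite {\<Sigma>\<in>A. card \<Sigma> > 1}
        \<longrightarrow> G \<prec>\<^sub>S setwise_stab A)
   \<and> (\<forall>G. subgroup G (SymG :: ('a \<Rightarrow> 'a) monoid) \<longrightarrow>
        ((countable G \<and> sym_closed G) \<longleftrightarrow>
           (\<exists>\<Gamma>. finite \<Gamma> \<and> pstab G \<Gamma> = {\<one>\<^bsub>SymG\<^esub>}))
      \<and> ((\<exists>\<Gamma>. finite \<Gamma> \<and> pstab G \<Gamma> = {\<one>\<^bsub>SymG\<^esub>}) \<longleftrightarrow> sym_discrete G))"
proof (intro conjI allI impI)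
  let ?S = "SymG :: ('a \<Rightarrow> 'a) monoid"
  have gr: "group ?S" by (rule group_SymG)
  show "\<exists>G0. subgroup G0 ?S \<and> {H. subgroup H ?S \<and> H \<approx>\<^sub>S G0} = {H. subgroup H ?S \<and> countable H}"
  proof (rule exI[of _ "{id}"], rule conjI)
    show "subgroup {id} ?S" using group.triv_subgroup[OF gr] by (simp add: one_SymG)
    have key: "H \<approx>\<^sub>S {id} \<longleftrightarrow> countable H" if sH: "subgroup H ?S" for H
    proof
      assume "H \<approx>\<^sub>S {id}"
      then have "H \<preccurlyeq>\<^sub>S {id}" unfolding sym_approx_def by (rule conjunct1)
      then have "\<exists>U. finite U \<and> U \<subseteq> carrier ?S \<and> H \<subseteq> generate ?S ({id} \<union> U)"
        unfolding sym_preceq_def .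
      then obtain U where U: "finite U" "U \<subseteq> carrier ?S" "H \<subseteq> generate ?S ({id} \<union> U)"
        by (elim exE conjE)
      have "countable ({id} \<union> U)" using U(1) by (simp add: countable_finite)
      moreover have "{id} \<union> U \<subseteq> carrier ?S" using U(2) by (simp add: carrier_SymG)
      ultimately have "countable (generate ?S ({id} \<union> U))" by (rule gen_countable)
      with U(3) show "countable H" by (rule countable_subset)
    next
      assume cH: "countable H"
      obtain U where U: "finite U" "U \<subseteq> carrier ?S" "H \<subseteq> generate ?S U"
        using galvin[OF inf cH subgroup.subset[OF sH]] by blast
      have "generate ?S U \<subseteq> generate ?S ({id} \<union> U)"
        by (rule group.mono_generate[OF gr]) (rule Un_upper2)
      then have "H \<subseteq> generate ?S ({id} \<union> U)" using U(3) by (rule subset_trans[rotated])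
      then have le1: "H \<preccurlyeq>\<^sub>S {id}" unfolding sym_preceq_def using U(1,2) by (intro exI[of _ U] conjI)
      have idg: "id \<in> generate ?S (H \<union> {})" using generate.one[of ?S "H \<union> {}"] by (simp add: one_SymG)
      have le2: "{id} \<preccurlyeq>\<^sub>S H" unfolding sym_preceq_def
        by (rule exI[of _ "{}"]) (simp only: finite.emptyI empty_subsetI insert_subset idg simp_thms)
      show "H \<approx>\<^sub>S {id}" unfolding sym_approx_def using le1 le2 by (rule conjI)
    qed
    show "{H. subgroup H ?S \<and> H \<approx>\<^sub>S {id}} = {H. subgroup H ?S \<and> countable H}"
    proof (rule Collect_cong)
      fix H :: "('a \<Rightarrow> 'a) set"
      show "(subgroup H ?S \<and> H \<approx>\<^sub>S {id}) = (subgroup H ?S \<and> countable H)"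
        using key[of H] by blast
    qed
  qed
next
  fix G :: "('a \<Rightarrow> 'a) set" and A :: "'a set set"
  let ?S = "SymG :: ('a \<Rightarrow> 'a) monoid"
  have gr: "group ?S" by (rule group_SymG)
  assume H: "subgroup G ?S \<and> countable G \<and> partition_on UNIV A \<and>
     (\<exists>n::nat. \<forall>\<Sigma>\<in>A. finite \<Sigma> \<and> card \<Sigma> \<le> n) \<and> infinite {\<Sigma> \<in> A. 1 < card \<Sigma>}"
  have sG: "subgroup G ?S" using H by (rule conjunct1)
  have cG: "countable G" using H[THEN conjunct2] by (rule conjunct1)
  have pA: "partition_on UNIV A" using H[THEN conjunct2, THEN conjunct2] by (rule conjunct1)
  have bnd: "\<exists>n::nat. \<forall>\<Sigma>\<in>A. finite \<Sigma> \<and> card \<Sigma> \<le> n"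
    using H[THEN conjunct2, THEN conjunct2, THEN conjunct2] by (rule conjunct1)
  have inf2: "infinite {\<Sigma> \<in> A. 1 < card \<Sigma>}"
    using H[THEN conjunct2, THEN conjunct2, THEN conjunct2] by (rule conjunct2)
  from bnd obtain n :: nat where n: "\<forall>\<Sigma>\<in>A. finite \<Sigma> \<and> card \<Sigma> \<le> n" by (erule exE)
  have fin: "\<forall>S\<in>A. finite S" using n by simp
  obtain U where U: "finite U" "U \<subseteq> carrier ?S" "G \<subseteq> generate ?S U"
    using galvin[OF inf cG subgroup.subset[OF sG]] by blast
  have "generate ?S U \<subseteq> generate ?S (setwise_stab A \<union> U)"
    by (rule group.mono_generate[OF gr]) (rule Un_upper2)
  then have "G \<subseteq> generate ?S (setwise_stab A \<union> U)" using U(3) by (rule subset_trans[rotated])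
  then have le: "G \<preccurlyeq>\<^sub>S setwise_stab A" unfolding sym_preceq_def using U(1,2) by (intro exI[of _ U] conjI)
  have nle: "\<not> setwise_stab A \<preccurlyeq>\<^sub>S G"
  proof
    assume "setwise_stab A \<preccurlyeq>\<^sub>S G"
    then have "\<exists>V. finite V \<and> V \<subseteq> carrier ?S \<and> setwise_stab A \<subseteq> generate ?S (G \<union> V)"
      unfolding sym_preceq_def .
    then obtain V where V: "finite V" "V \<subseteq> carrier ?S" "setwise_stab A \<subseteq> generate ?S (G \<union> V)"
      by (elim exE conjE)
    have "countable (G \<union> V)" using cG V(1) by (simp add: countable_finite)
    moreover have "G \<union> V \<subseteq> carrier ?S" using V(2) subgroup.subset[OF sG] by (rule Un_least[rotated])
    ultimately have "countable (generate ?S (G \<union> V))" by (rule gen_countable)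
    with V(3) have "countable (setwise_stab A)" by (rule countable_subset)
    then show False by (rule notE[OF stab_uncountable[OF pA fin inf2]])
  qed
  show "G \<prec>\<^sub>S setwise_stab A" unfolding sym_prec_def using le nle by (rule conjI)
next
  fix G :: "('a \<Rightarrow> 'a) set"
  assume sG: "subgroup G SymG"
  have e1: "(\<exists>\<Gamma>. finite \<Gamma> \<and> pstab G \<Gamma> = {\<one>\<^bsub>SymG\<^esub>}) = (\<exists>\<Gamma>. finite \<Gamma> \<and> pstab G \<Gamma> = {id})"
    by (simp add: one_SymG)
  show "(countable G \<and> sym_closed G) = (\<exists>\<Gamma>. finite \<Gamma> \<and> pstab G \<Gamma> = {\<one>\<^bsub>SymG\<^esub>})"
    unfolding e1
  proof
    assume "countable G \<and> sym_closed G"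
    then show "\<exists>\<Gamma>. finite \<Gamma> \<and> pstab G \<Gamma> = {id}" using closed_countable_stab[OF sG] by blast
  next
    assume "\<exists>\<Gamma>. finite \<Gamma> \<and> pstab G \<Gamma> = {id}"
    then obtain D where D: "finite D" "pstab G D = {id}" by blast
    show "countable G \<and> sym_closed G" using stab_countable[OF sG D] stab_closed[OF sG D] by blast
  qed
  show "(\<exists>\<Gamma>. finite \<Gamma> \<and> pstab G \<Gamma> = {\<one>\<^bsub>SymG\<^esub>}) = sym_discrete G"
    unfolding e1
  proof
    assume "\<exists>\<Gamma>. finite \<Gamma> \<and> pstab G \<Gamma> = {id}"
    then obtain D where D: "finite D" "pstab G D = {id}" by blast
    show "sym_discrete G" using stab_discrete[OF sG D] .
  next
    assume "sym_discrete G"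
    then show "\<exists>\<Gamma>. finite \<Gamma> \<and> pstab G \<Gamma> = {id}" using discrete_stab[OF sG] by blast
  qed
qed

end
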